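(* Let $f\colon\Sigma\to\mathbb{R}^3$ be a frontal and $p\in\Sigma$ a non-degenerate singular point. Let $\gamma=\gamma(t)$ be a singular curve with $\gamma(0)=p$, and let $\xi,\eta$ be smooth vector fields near $p$ such that along $\gamma$ one has $\xi=\gamma'$, $df(\eta)=0$ and $\det(\xi,\eta)>0$. Assume that (a) $\eta^3f(p)=\mathbf{0}$; (b) $\xi f(p)$ and $\eta^2f(p)$ are linearly independent; (c) $\xi\eta^3f(p)$ and $\eta^2f(p)$ are linearly dependent. Then there exist a regular curve $c\colon(-\varepsilon,\varepsilon)\to\Sigma$ and $\ell\in\mathbb{R}$ such that, writing $\hat c=f\circ c$: $c(0)=p$, $c'(0)$ is parallel to $\eta(p)$, $\hat c''(0)\neq\mathbf 0$, $\hat c'''(0)=\ell\,\hat c''(0)$, and \[ B:=\det\big(df(\gamma'(0)),\,\hat c''(0),\,3\hat c^{(5)}(0)-10\ell\,\hat c^{(4)}(0)\big)=3\det\big(\xi f,\eta^2f,\eta^5f\big)(p). \]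
   Context: A smooth map $f\colon U\to\mathbb{R}^3$ from a surface is a frontal if there is a smooth map $n\colon U\to S^2$ with $n$ orthogonal (for the Euclidean inner product) to $df(TU)$. A singular point is a point where $f$ is not an immersion. The signed area density is $\lambda=\det(f_u,f_v,n)$ in local coordinates $(u,v)$; a singular point $p$ is non-degenerate if $d\lambda_p\neq0$. Near a non-degenerate singular point the singular set is the image of a regular curve $\gamma$ (a singular curve). For a vector field $\eta$, $\eta^kf$ denotes the $k$-fold directional derivative $\eta\cdots\eta f$, and $\xi\eta^3f=\xi(\eta^3 f)$. *)

theory Defs
  imports "HOL-Analysis.Analysis"
begin

(* Local model: the surface Sigma is replaced by an open set U of the coordinate
   plane real \<times> real (coordinates (u,v)); R^3 is real^3. *)

fun Ck_on :: "nat \<Rightarrow> 'a::euclidean_space set \<Rightarrow> ('a \<Rightarrow> 'b::real_normed_vector) \<Rightarrow> bool" where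
  "Ck_on 0 U g = continuous_on U g"
| "Ck_on (Suc k) U g = (g differentiable_on U \<and>
      (\<forall>v. Ck_on k U (\<lambda>x. frechet_derivative g (at x) v)))"

definition C_infty_on :: "'a::euclidean_space set \<Rightarrow> ('a \<Rightarrow> 'b::real_normed_vector) \<Rightarrow> bool" where
  "C_infty_on U g \<longleftrightarrow> (\<forall>k. Ck_on k U g)"

definition det3 :: "real^3 \<Rightarrow> real^3 \<Rightarrow> real^3 \<Rightarrow> real" where
  "det3 a b c = det (vector [a, b, c] :: real^3^3)"

definition det2 :: "real \<times> real \<Rightarrow> real \<times> real \<Rightarrow> real" where
  "det2 a b = fst a * snd b - snd a * fst b"

definition vf_deriv :: "(real \<times> real \<Rightarrow> real \<times> real) \<Rightarrow> (real \<times> real \<Rightarrow> 'b::real_normed_vector)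
    \<Rightarrow> real \<times> real \<Rightarrow> 'b" where
  "vf_deriv X g = (\<lambda>x. frechet_derivative g (at x) (X x))"

definition vf_iter :: "(real \<times> real \<Rightarrow> real \<times> real) \<Rightarrow> nat \<Rightarrow> (real \<times> real \<Rightarrow> 'b::real_normed_vector)
    \<Rightarrow> real \<times> real \<Rightarrow> 'b" where
  "vf_iter X k g = (vf_deriv X ^^ k) g"

definition nderiv :: "nat \<Rightarrow> (real \<Rightarrow> 'b::real_normed_vector) \<Rightarrow> real \<Rightarrow> 'b" where
  "nderiv k g = ((\<lambda>h t. vector_derivative h (at t)) ^^ k) g"

definition lin_indep2 :: "'b::real_vector \<Rightarrow> 'b \<Rightarrow> bool" where
  "lin_indep2 a b \<longleftrightarrow> (\<forall>s t. s *\<^sub>R a + t *\<^sub>R b = 0 \<longrightarrow> s = 0 \<and> t = 0)"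

definition frontal_with :: "(real \<times> real) set \<Rightarrow> (real \<times> real \<Rightarrow> real^3) \<Rightarrow> (real \<times> real \<Rightarrow> real^3) \<Rightarrow> bool" where
  "frontal_with U f n \<longleftrightarrow> open U \<and> C_infty_on U f \<and> C_infty_on U n \<and>
     (\<forall>x\<in>U. norm (n x) = 1 \<and> (\<forall>v. n x \<bullet> frechet_derivative f (at x) v = 0))"

definition singular_pt :: "(real \<times> real \<Rightarrow> real^3) \<Rightarrow> real \<times> real \<Rightarrow> bool" where
  "singular_pt f x \<longleftrightarrow> \<not> inj (frechet_derivative f (at x))"

definition area_density :: "(real \<times> real \<Rightarrow> real^3) \<Rightarrow> (real \<times> real \<Rightarrow> real^3) \<Rightarrow> real \<times> real \<Rightarrow> real" where
  "area_density f n x = det3 (frechet_derivative f (at x) (1, 0)) (frechet_derivative f (at x) (0, 1)) (n x)"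

definition nondegenerate_singular_pt :: "(real \<times> real \<Rightarrow> real^3) \<Rightarrow> (real \<times> real \<Rightarrow> real^3) \<Rightarrow> real \<times> real \<Rightarrow> bool" where
  "nondegenerate_singular_pt f n p \<longleftrightarrow> singular_pt f p \<and>
     frechet_derivative (area_density f n) (at p) \<noteq> (\<lambda>_. 0)"

end

theory Submission
  imports Defs
begin


lemma Ck_mono: "Ck_on (Suc k) S g \<Longrightarrow> Ck_on k S g"
proof (induction k arbitrary: g)
  case 0 then show ?case by (simp add: differentiable_imp_continuous_on)
next
  case (Suc k) then show ?case by (metis Ck_on.simps(2))
qed

lemma Ck_mono_le: "m \<le> k \<Longrightarrow> Ck_on k S g \<Longrightarrow> Ck_on m S g"
proof (induction k)
  case 0 then show ?case by simp
next
  case (Suc k) show ?case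
  proof (cases "m = Suc k")
    case True with Suc.prems show ?thesis by simp
  next
    case False then have "m \<le> k" using Suc.prems(1) by simp
    with Suc.IH Suc.prems(2) Ck_mono show ?thesis by blast
  qed
qed

lemma frechet_eq_open:
  assumes "open S" "x \<in> S" "\<And>y. y \<in> S \<Longrightarrow> g y = g' y"
  shows "frechet_derivative g (at x) = frechet_derivative g' (at x)"
proof -
  have "\<And>D. (g has_derivative D) (at x) \<longleftrightarrow> (g' has_derivative D) (at x)"
    using has_derivative_transform_within_open[OF _ assms(1,2)] assms(3) by metis
  then show ?thesis unfolding frechet_derivative_def by simp
qed

lemma Ck_cong:
  assumes "open S" "Ck_on k S g" "\<And>x. x \<in> S \<Longrightarrow> g x = g' x"
  shows "Ck_on k S g'"
  using assms(2,3)
proof (induction k arbitrary: g g')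
  case 0 then show ?case using continuous_on_cong by (metis Ck_on.simps(1))
next
  case (Suc k)
  have d: "g' differentiable_on S"
    unfolding differentiable_on_eq_differentiable_at[OF assms(1)]
  proof
    fix x assume x: "x \<in> S"
    then have "g differentiable at x" using Suc.prems(1)
      unfolding Ck_on.simps differentiable_on_eq_differentiable_at[OF assms(1)] by blast
    then obtain D where "(g has_derivative D) (at x)" unfolding differentiable_def by blast
    then have "(g' has_derivative D) (at x)"
      using has_derivative_transform_within_open[OF _ assms(1) x] Suc.prems(2) by blast
    then show "g' differentiable at x" unfolding differentiable_def by blast
  qed
  have "Ck_on k S (\<lambda>x. frechet_derivative g' (at x) v)" for v
  proof (rule Suc.IH[of "\<lambda>x. frechet_derivative g (at x) v"])
    show "Ck_on k S (\<lambda>x. frechet_derivative g (at x) v)" using Suc.prems(1) by simp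
    fix x assume "x \<in> S"
    then show "frechet_derivative g (at x) v = frechet_derivative g' (at x) v"
      using frechet_eq_open[OF assms(1) \<open>x \<in> S\<close>, of g g'] Suc.prems(2) by simp
  qed
  then show ?case using d by simp
qed

lemma Ck_Suc_intro:
  assumes "open S" "g differentiable_on S"
    "\<And>v. \<exists>D. Ck_on k S D \<and> (\<forall>x\<in>S. frechet_derivative g (at x) v = D x)"
  shows "Ck_on (Suc k) S g"
proof -
  have "Ck_on k S (\<lambda>x. frechet_derivative g (at x) v)" for v
  proof -
    obtain D where D: "Ck_on k S D" "\<forall>x\<in>S. frechet_derivative g (at x) v = D x"
      using assms(3) by blast
    show ?thesis by (rule Ck_cong[OF assms(1) D(1)]) (simp add: D(2))
  qed
  then show ?thesis using assms(2) by simp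
qed


lemma fd_apply: "(f has_derivative D) (at x) \<Longrightarrow> frechet_derivative f (at x) v = D v"
proof -
  assume "(f has_derivative D) (at x)"
  from frechet_derivative_at[OF this] show ?thesis by simp
qed

lemma Ck_const: "Ck_on k S (\<lambda>x. c)"
proof (induction k arbitrary: c)
  case 0 then show ?case by simp
next
  case (Suc k)
  have "frechet_derivative (\<lambda>x. c) (at x) = (\<lambda>_. 0)" for x
    by (rule frechet_derivative_at[symmetric]) (rule has_derivative_const)
  then show ?case using Suc.IH by simp
qed

lemma Ck_add:
  assumes "open S"
  shows "Ck_on k S a \<Longrightarrow> Ck_on k S b \<Longrightarrow> Ck_on k S (\<lambda>x. a x + b x)"
proof (induction k arbitrary: a b)
  case 0 then show ?case by (simp add: continuous_on_add)
next
  case (Suc k)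
  have da: "a differentiable_on S" and db: "b differentiable_on S" using Suc.prems by auto
  show ?case
  proof (rule Ck_Suc_intro[OF assms])
    show "(\<lambda>x. a x + b x) differentiable_on S" using da db by (rule differentiable_on_add)
    fix v
    show "\<exists>D. Ck_on k S D \<and> (\<forall>x\<in>S. frechet_derivative (\<lambda>x. a x + b x) (at x) v = D x)"
    proof (intro exI conjI ballI)
      show "Ck_on k S (\<lambda>x. frechet_derivative a (at x) v + frechet_derivative b (at x) v)"
        using Suc.IH Suc.prems by simp
      fix x assume x: "x \<in> S"
      then have "a differentiable at x" "b differentiable at x"
        using da db differentiable_on_eq_differentiable_at[OF assms] by auto
      then have "((\<lambda>x. a x + b x) has_derivative (\<lambda>v. frechet_derivative a (at x) v + frechet_derivative b (at x) v)) (at x)"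
        by (intro has_derivative_add) (auto simp: frechet_derivative_works)
      then show "frechet_derivative (\<lambda>x. a x + b x) (at x) v = frechet_derivative a (at x) v + frechet_derivative b (at x) v"
        by (rule fd_apply)
    qed
  qed
qed

lemma Ck_scaleR:
  fixes a :: "'a::euclidean_space \<Rightarrow> real" and b :: "'a \<Rightarrow> 'b::real_normed_vector"
  assumes "open S"
  shows "Ck_on k S a \<Longrightarrow> Ck_on k S b \<Longrightarrow> Ck_on k S (\<lambda>x. a x *\<^sub>R b x)"
proof (induction k arbitrary: a b)
  case 0 then show ?case by (simp add: continuous_on_scaleR)
next
  case (Suc k)
  have da: "a differentiable_on S" and db: "b differentiable_on S" using Suc.prems by auto
  have ak: "Ck_on k S a" and bk: "Ck_on k S b" using Suc.prems Ck_mono by blast+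
  show ?case
  proof (rule Ck_Suc_intro[OF assms])
    show "(\<lambda>x. a x *\<^sub>R b x) differentiable_on S" using da db by (rule differentiable_on_scaleR)
    fix v
    show "\<exists>D. Ck_on k S D \<and> (\<forall>x\<in>S. frechet_derivative (\<lambda>x. a x *\<^sub>R b x) (at x) v = D x)"
    proof (intro exI conjI ballI)
      show "Ck_on k S (\<lambda>x. a x *\<^sub>R frechet_derivative b (at x) v + frechet_derivative a (at x) v *\<^sub>R b x)"
        using Suc.IH Suc.prems ak bk by (intro Ck_add[OF assms]) simp_all
      fix x assume x: "x \<in> S"
      then have "a differentiable at x" "b differentiable at x"
        using da db differentiable_on_eq_differentiable_at[OF assms] by auto
      then have "((\<lambda>x. a x *\<^sub>R b x) has_derivative (\<lambda>v. a x *\<^sub>R frechet_derivative b (at x) v + frechet_derivative a (at x) v *\<^sub>R b x)) (at x)"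
        by (intro has_derivative_scaleR) (auto simp: frechet_derivative_works)
      then show "frechet_derivative (\<lambda>x. a x *\<^sub>R b x) (at x) v = a x *\<^sub>R frechet_derivative b (at x) v + frechet_derivative a (at x) v *\<^sub>R b x"
        by (rule fd_apply)
    qed
  qed
qed

lemma Ck_linear:
  assumes "open S" "bounded_linear L"
  shows "Ck_on k S g \<Longrightarrow> Ck_on k S (\<lambda>x. L (g x))"
proof (induction k arbitrary: g)
  case 0 then show ?case
    using assms(2) by (simp add: linear_continuous_on continuous_on_compose2[of UNIV L])
next
  case (Suc k)
  have dg: "g differentiable_on S" using Suc.prems by auto
  show ?case
  proof (rule Ck_Suc_intro[OF assms(1)])
    show "(\<lambda>x. L (g x)) differentiable_on S"
      using dg assms(2) unfolding differentiable_on_eq_differentiable_at[OF assms(1)]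
      by (auto intro: differentiable_chain_at[unfolded o_def] bounded_linear_imp_differentiable)
    fix v
    show "\<exists>D. Ck_on k S D \<and> (\<forall>x\<in>S. frechet_derivative (\<lambda>x. L (g x)) (at x) v = D x)"
    proof (intro exI conjI ballI)
      show "Ck_on k S (\<lambda>x. L (frechet_derivative g (at x) v))"
        using Suc.IH Suc.prems by simp
      fix x assume x: "x \<in> S"
      then have "g differentiable at x"
        using dg differentiable_on_eq_differentiable_at[OF assms(1)] by auto
      then have "((\<lambda>x. L (g x)) has_derivative (\<lambda>v. L (frechet_derivative g (at x) v))) (at x)"
        using bounded_linear.has_derivative[OF assms(2)] by (auto simp: frechet_derivative_works)
      then show "frechet_derivative (\<lambda>x. L (g x)) (at x) v = L (frechet_derivative g (at x) v)"
        by (rule fd_apply)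
    qed
  qed
qed

lemma lin_decomp:
  fixes w :: "real \<times> real"
  assumes "linear D"
  shows "D w = fst w *\<^sub>R D (1,0) + snd w *\<^sub>R D (0,1)"
proof -
  obtain a b where w: "w = (a,b)" by (cases w)
  have ad: "D (x + y) = D x + D y" and sc: "D (c *\<^sub>R x) = c *\<^sub>R D x" for x y c
    using assms[unfolded linear_iff] by blast+
  have "D (a,b) = D (a,0) + D (0,b)" using ad[of "(a,0)" "(0,b)"] by simp
  moreover have "D (a,0) = a *\<^sub>R D (1,0)" using sc[of a "(1,0)"] by simp
  moreover have "D (0,b) = b *\<^sub>R D (0,1)" using sc[of b "(0,1)"] by simp
  ultimately show ?thesis using w by simp
qed

lemma Ck_comp:
  fixes g :: "real \<times> real \<Rightarrow> 'b::real_normed_vector" and c :: "'a::euclidean_space \<Rightarrow> real \<times> real"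
  assumes "open S" "open T" "c ` T \<subseteq> S"
  shows "Ck_on k S g \<Longrightarrow> Ck_on k T c \<Longrightarrow> Ck_on k T (\<lambda>t. g (c t))"
proof (induction k arbitrary: g)
  case 0 then show ?case using assms(3) by (simp add: continuous_on_compose2)
next
  case (Suc k)
  have dg: "g differentiable_on S" and dc: "c differentiable_on T" using Suc.prems by auto
  have ck: "Ck_on k T c" using Suc.prems(2) Ck_mono by blast
  have dat: "c differentiable at t" "g differentiable at (c t)" if "t \<in> T" for t
  proof -
    show "c differentiable at t" using that dc differentiable_on_eq_differentiable_at[OF assms(2)] by blast
    have "c t \<in> S" using that assms(3) by blast
    then show "g differentiable at (c t)" using dg differentiable_on_eq_differentiable_at[OF assms(1)] by blast
  qed
  show ?case
  proof (rule Ck_Suc_intro[OF assms(2)])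
    show "(\<lambda>t. g (c t)) differentiable_on T"
      unfolding differentiable_on_eq_differentiable_at[OF assms(2)]
      using dat differentiable_chain_at[unfolded o_def] by blast
    fix v
    let ?w = "\<lambda>t. frechet_derivative c (at t) v"
    let ?g1 = "\<lambda>x. frechet_derivative g (at x) (1,0)"
    let ?g2 = "\<lambda>x. frechet_derivative g (at x) (0,1)"
    show "\<exists>D. Ck_on k T D \<and> (\<forall>t\<in>T. frechet_derivative (\<lambda>t. g (c t)) (at t) v = D t)"
    proof (intro exI conjI ballI)
      have w: "Ck_on k T ?w" using Suc.prems(2) by simp
      have g1: "Ck_on k T (\<lambda>t. ?g1 (c t))" using Suc.IH[of ?g1] Suc.prems(1) ck by simp
      have g2: "Ck_on k T (\<lambda>t. ?g2 (c t))" using Suc.IH[of ?g2] Suc.prems(1) ck by simp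
      show "Ck_on k T (\<lambda>t. fst (?w t) *\<^sub>R ?g1 (c t) + snd (?w t) *\<^sub>R ?g2 (c t))"
        by (intro Ck_add[OF assms(2)] Ck_scaleR[OF assms(2)] g1 g2
            Ck_linear[OF assms(2) bounded_linear_fst w] Ck_linear[OF assms(2) bounded_linear_snd w])
      fix t assume t: "t \<in> T"
      have hc: "(c has_derivative frechet_derivative c (at t)) (at t)"
        using dat(1)[OF t] frechet_derivative_works by blast
      have hg: "(g has_derivative frechet_derivative g (at (c t))) (at (c t))"
        using dat(2)[OF t] frechet_derivative_works by blast
      have "frechet_derivative (\<lambda>t. g (c t)) (at t) v = frechet_derivative g (at (c t)) (?w t)"
        using fd_apply[OF diff_chain_at[OF hc hg]] by (simp add: o_def)
      also have "\<dots> = fst (?w t) *\<^sub>R ?g1 (c t) + snd (?w t) *\<^sub>R ?g2 (c t)"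
        by (rule lin_decomp) (rule has_derivative_linear[OF hg])
      finally show "frechet_derivative (\<lambda>t. g (c t)) (at t) v = fst (?w t) *\<^sub>R ?g1 (c t) + snd (?w t) *\<^sub>R ?g2 (c t)" .
    qed
  qed
qed

lemma Ck_vf:
  fixes g :: "real \<times> real \<Rightarrow> 'b::real_normed_vector"
  assumes "open S" "Ck_on (Suc k) S g" "Ck_on k S X"
  shows "Ck_on k S (vf_deriv X g)"
proof (rule Ck_cong[OF assms(1)])
  let ?g1 = "\<lambda>x. frechet_derivative g (at x) (1,0)"
  let ?g2 = "\<lambda>x. frechet_derivative g (at x) (0,1)"
  show "Ck_on k S (\<lambda>x. fst (X x) *\<^sub>R ?g1 x + snd (X x) *\<^sub>R ?g2 x)"
    using assms(2) by (intro Ck_add[OF assms(1)] Ck_scaleR[OF assms(1)]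
            Ck_linear[OF assms(1) bounded_linear_fst assms(3)] Ck_linear[OF assms(1) bounded_linear_snd assms(3)]) auto
  fix x assume x: "x \<in> S"
  have "g differentiable at x" using assms(2) x differentiable_on_eq_differentiable_at[OF assms(1)] by auto
  then have "linear (frechet_derivative g (at x))"
    using frechet_derivative_works has_derivative_linear by blast
  then show "fst (X x) *\<^sub>R ?g1 x + snd (X x) *\<^sub>R ?g2 x = vf_deriv X g x"
    unfolding vf_deriv_def by (rule lin_decomp[symmetric])
qed



lemma int_lip_le:
  fixes g :: "real \<Rightarrow> 'a::banach"
  assumes "continuous_on {a0..b0} g" "\<And>s. s \<in> {a0..b0} \<Longrightarrow> norm (g s) \<le> K"
    "u \<in> {a0..b0}" "v \<in> {a0..b0}" "v \<le> u"
  shows "norm (integral {a0..u} g - integral {a0..v} g) \<le> K * \<bar>u - v\<bar>"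
proof -
  have i: "g integrable_on {a0..u}"
    using assms by (intro integrable_continuous_interval) (auto intro: continuous_on_subset)
  have "integral {a0..v} g + integral {v..u} g = integral {a0..u} g"
    using assms by (intro Henstock_Kurzweil_Integration.integral_combine[OF _ _ i]) auto
  then have "integral {a0..u} g - integral {a0..v} g = integral {v..u} g" by (metis add_diff_cancel_left')
  also have "norm \<dots> \<le> K * (u - v)"
    using assms by (intro integral_bound) (auto intro: continuous_on_subset)
  finally show ?thesis using assms by simp
qed

lemma int_lip:
  fixes g :: "real \<Rightarrow> 'a::banach"
  assumes "continuous_on {a0..b0} g" "\<And>s. s \<in> {a0..b0} \<Longrightarrow> norm (g s) \<le> K"
    "u \<in> {a0..b0}" "v \<in> {a0..b0}"
  shows "norm (integral {a0..u} g - integral {a0..v} g) \<le> K * \<bar>u - v\<bar>"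
proof (cases "v \<le> u")
  case True then show ?thesis using int_lip_le[OF assms] by blast
next
  case False
  then have "norm (integral {a0..v} g - integral {a0..u} g) \<le> K * \<bar>v - u\<bar>"
    using int_lip_le[OF assms(1,2,4,3)] by simp
  then show ?thesis by (simp add: norm_minus_commute abs_minus_commute)
qed

lemma cont_bound:
  fixes g :: "'a::metric_space \<Rightarrow> 'b::real_normed_vector"
  assumes "continuous_on K g" "compact K"
  obtains B where "B > 0" "\<And>x. x \<in> K \<Longrightarrow> norm (g x) \<le> B"
proof -
  have "bounded (g ` K)" using compact_continuous_image[OF assms(1,2)] compact_imp_bounded by blast
  then show ?thesis using that unfolding bounded_pos by blast
qed

lemma C1_lipschitz:
  fixes \<eta> :: "real \<times> real \<Rightarrow> real \<times> real"
  assumes "open U" "Ck_on 1 U \<eta>" "K \<subseteq> U" "compact K" "convex K"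
  obtains L where "L \<ge> 0" "\<And>x y. x \<in> K \<Longrightarrow> y \<in> K \<Longrightarrow> norm (\<eta> x - \<eta> y) \<le> L * norm (x - y)"
proof -
  let ?g1 = "\<lambda>x. frechet_derivative \<eta> (at x) (1,0)"
  let ?g2 = "\<lambda>x. frechet_derivative \<eta> (at x) (0,1)"
  have c1: "continuous_on K ?g1" and c2: "continuous_on K ?g2"
    using assms(2,3) by (auto intro: continuous_on_subset)
  obtain B1 where B1: "B1 > 0" "\<And>x. x \<in> K \<Longrightarrow> norm (?g1 x) \<le> B1" using cont_bound[OF c1 assms(4)] by blast
  obtain B2 where B2: "B2 > 0" "\<And>x. x \<in> K \<Longrightarrow> norm (?g2 x) \<le> B2" using cont_bound[OF c2 assms(4)] by blast
  have der: "(\<eta> has_derivative frechet_derivative \<eta> (at x)) (at x)" if "x \<in> K" for x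
  proof -
    have "\<eta> differentiable at x" using assms(2,3) that differentiable_on_eq_differentiable_at[OF assms(1)] by auto
    then show ?thesis using frechet_derivative_works by blast
  qed
  have on: "onorm (frechet_derivative \<eta> (at x)) \<le> B1 + B2" if x: "x \<in> K" for x
  proof (rule onorm_le)
    fix w :: "real \<times> real"
    have "frechet_derivative \<eta> (at x) w = fst w *\<^sub>R ?g1 x + snd w *\<^sub>R ?g2 x"
      by (rule lin_decomp) (rule has_derivative_linear[OF der[OF x]])
    also have "norm \<dots> \<le> \<bar>fst w\<bar> * norm (?g1 x) + \<bar>snd w\<bar> * norm (?g2 x)"
      by (rule order_trans[OF norm_triangle_ineq]) simp
    also have "\<dots> \<le> norm w * B1 + norm w * B2"
    proof (intro add_mono mult_mono)
      show "\<bar>fst w\<bar> \<le> norm w" using norm_fst_le[of "fst w" "snd w"] by simp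
      show "\<bar>snd w\<bar> \<le> norm w" using norm_snd_le[of "snd w" "fst w"] by simp
    qed (use B1 B2 x in auto)
    finally show "norm (frechet_derivative \<eta> (at x) w) \<le> (B1 + B2) * norm w" by (simp add: algebra_simps)
  qed
  show ?thesis
  proof (rule that[of "B1 + B2"])
    show "0 \<le> B1 + B2" using B1 B2 by simp
    fix x y assume "x \<in> K" "y \<in> K"
    then show "norm (\<eta> x - \<eta> y) \<le> (B1 + B2) * norm (x - y)"
      using differentiable_bound[OF assms(5), of \<eta> "\<lambda>x. frechet_derivative \<eta> (at x)"] der on
      by (meson has_derivative_at_withinI)
  qed
qed

lemma ode_exists:
  fixes \<eta> :: "real \<times> real \<Rightarrow> real \<times> real"
  assumes U: "open U" and eta1: "Ck_on 1 U \<eta>" and sub: "cball p r \<subseteq> U" and r: "r > 0"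
  obtains h c where "h > 0" "c 0 = p" "\<And>t. c t \<in> cball p r"
    "\<And>t. t \<in> {-h<..<h} \<Longrightarrow> (c has_vector_derivative \<eta> (c t)) (at t)"
proof -
  have contU: "continuous_on U \<eta>" using eta1 Ck_mono[of 0 U \<eta>] by simp
  then have contK: "continuous_on (cball p r) \<eta>" using sub continuous_on_subset by blast
  obtain M where M: "M > 0" "\<And>x. x \<in> cball p r \<Longrightarrow> norm (\<eta> x) \<le> M"
    using cont_bound[OF contK compact_cball] by blast
  obtain L where L: "L \<ge> 0" "\<And>x y. x \<in> cball p r \<Longrightarrow> y \<in> cball p r \<Longrightarrow> norm (\<eta> x - \<eta> y) \<le> L * norm (x - y)"
    using C1_lipschitz[OF U eta1 sub compact_cball convex_cball] by blast
  define h where "h = min (r / M) (1 / (2 * (L + 1)))"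
  have hpos: "h > 0" using r M L unfolding h_def by simp
  have hM: "h * M \<le> r"
  proof -
    have "h \<le> r / M" unfolding h_def by simp
    then show ?thesis using M by (simp add: field_simps)
  qed
  have hL: "h * L \<le> 1 / 2"
  proof -
    have "h \<le> 1 / (2 * (L + 1))" unfolding h_def by simp
    then have "h * (2 * (L + 1)) \<le> 1" using L by (simp add: field_simps)
    then show ?thesis using hpos L by (simp add: algebra_simps)
  qed
  define clamp where "clamp t = max (-h) (min h t)" for t :: real
  have clamp_in: "clamp t \<in> {-h..h}" for t unfolding clamp_def using hpos by auto
  have clamp_id: "t \<in> {-h..h} \<Longrightarrow> clamp t = t" for t unfolding clamp_def by auto
  have clamp_cont: "continuous_on UNIV clamp" unfolding clamp_def by (intro continuous_intros)
  define S :: "(real \<Rightarrow>\<^sub>C (real \<times> real)) set" where "S = PiC UNIV (\<lambda>_. cball p r)"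
  have inS: "x \<in> S \<longleftrightarrow> (\<forall>t. apply_bcontfun x t \<in> cball p r)" for x :: "real \<Rightarrow>\<^sub>C (real \<times> real)"
    unfolding S_def mem_PiC_iff Pi_def by simp
  define F where "F x t = p + (integral {-h..clamp t} (\<lambda>s. \<eta> (apply_bcontfun x s))
      - integral {-h..0} (\<lambda>s. \<eta> (apply_bcontfun x s)))" for x :: "real \<Rightarrow>\<^sub>C (real \<times> real)" and t
  define T where "T x = Bcontfun (F x)" for x
  have gcont: "continuous_on {-h..h} (\<lambda>s. \<eta> (apply_bcontfun x s))" if "x \<in> S" for x
    using that unfolding inS
    by (intro continuous_on_compose2[OF contK continuous_on_apply_bcontfun]) auto
  have gbound: "norm (\<eta> (apply_bcontfun x s)) \<le> M" if "x \<in> S" for x s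
    using that M(2) unfolding inS by blast
  have Fin: "F x t \<in> cball p r" if x: "x \<in> S" for x t
  proof -
    have "norm (F x t - p) \<le> M * \<bar>clamp t - 0\<bar>"
      unfolding F_def using int_lip[OF gcont[OF x], of M "clamp t" 0] gbound[OF x] clamp_in hpos by simp
    also have "\<dots> \<le> M * h" using clamp_in[of t] M by (intro mult_left_mono) auto
    also have "\<dots> \<le> r" using hM by (simp add: mult.commute)
    finally show ?thesis by (simp add: dist_norm norm_minus_commute)
  qed
  have Fcont: "continuous_on UNIV (F x)" if x: "x \<in> S" for x
  proof -
    have "continuous_on {-h..h} (\<lambda>u. integral {-h..u} (\<lambda>s. \<eta> (apply_bcontfun x s)))"
      by (rule indefinite_integral_continuous_1) (rule integrable_continuous_interval[OF gcont[OF x]])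
    then have "continuous_on UNIV (\<lambda>t. integral {-h..clamp t} (\<lambda>s. \<eta> (apply_bcontfun x s)))"
      using continuous_on_compose2[OF _ clamp_cont, of "{-h..h}"] clamp_in by blast
    then show ?thesis unfolding F_def by (intro continuous_intros)
  qed
  have Fbc: "F x \<in> bcontfun" if x: "x \<in> S" for x
  proof (rule bcontfun_normI[OF Fcont[OF x]])
    fix t
    have "norm (F x t - p) \<le> r" using Fin[OF x, of t] by (simp add: dist_norm norm_minus_commute)
    then show "norm (F x t) \<le> norm p + r" using norm_triangle_sub[of "F x t" p] by linarith
  qed
  have TF: "apply_bcontfun (T x) = F x" if "x \<in> S" for x
    unfolding T_def using Fbc[OF that] by (simp add: Bcontfun_inverse)
  have TS: "T ` S \<subseteq> S" using TF Fin inS by auto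
  have contr: "dist (T x) (T y) \<le> (1/2) * dist x y" if x: "x \<in> S" and y: "y \<in> S" for x y
  proof (rule dist_bound)
    fix t
    let ?gx = "\<lambda>s. \<eta> (apply_bcontfun x s)" and ?gy = "\<lambda>s. \<eta> (apply_bcontfun y s)"
    let ?d = "\<lambda>s. ?gx s - ?gy s"
    have ix: "?gx integrable_on {-h..u}" and iy: "?gy integrable_on {-h..u}" if "u \<in> {-h..h}" for u
      using that gcont[OF x] gcont[OF y]
      by (auto intro!: integrable_continuous_interval intro: continuous_on_subset)
    have eq: "integral {-h..u} ?d = integral {-h..u} ?gx - integral {-h..u} ?gy" if "u \<in> {-h..h}" for u
      by (rule integral_diff[OF ix[OF that] iy[OF that]])
    have "F x t - F y t = integral {-h..clamp t} ?d - integral {-h..0} ?d"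
      unfolding F_def using eq[OF clamp_in[of t]] eq[of 0] hpos by (simp add: algebra_simps)
    also have "norm \<dots> \<le> (L * dist x y) * \<bar>clamp t - 0\<bar>"
    proof (rule int_lip)
      show "continuous_on {-h..h} ?d" using gcont[OF x] gcont[OF y] by (intro continuous_intros)
      fix s
      have "norm (?d s) \<le> L * norm (apply_bcontfun x s - apply_bcontfun y s)"
        using L(2) x y unfolding inS by blast
      also have "\<dots> \<le> L * dist x y"
        using dist_bounded[of x s y] L(1) by (intro mult_left_mono) (auto simp: dist_norm)
      finally show "norm (?d s) \<le> L * dist x y" .
    qed (use clamp_in hpos in auto)
    also have "\<dots> \<le> (L * dist x y) * h"
      using clamp_in[of t] L(1) by (intro mult_left_mono) auto
    also have "\<dots> = (h * L) * dist x y" by simp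
    also have "\<dots> \<le> (1/2) * dist x y" using hL by (intro mult_right_mono) auto
    finally show "dist (apply_bcontfun (T x) t) (apply_bcontfun (T y) t) \<le> (1/2) * dist x y"
      using TF[OF x] TF[OF y] by (simp add: dist_norm)
  qed
  have Scomplete: "complete S" unfolding complete_eq_closed S_def
    by (rule closed_PiC) simp
  have Sne: "S \<noteq> {}"
  proof -
    have "const_bcontfun p \<in> S" unfolding inS using r by (simp add: const_bcontfun.rep_eq)
    then show ?thesis by blast
  qed
  obtain x where x: "x \<in> S" "T x = x"
    using Banach_fix[OF Scomplete Sne _ _ TS contr] by auto
  define c where "c = apply_bcontfun x"
  have cF: "c = F x" unfolding c_def using TF[OF x(1)] x(2) by simp
  show ?thesis
  proof (rule that[of h c])
    show "h > 0" by (rule hpos)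
    show "c 0 = p" unfolding cF F_def using clamp_id[of 0] hpos by simp
    show "c t \<in> cball p r" for t unfolding cF by (rule Fin[OF x(1)])
    fix t assume t: "t \<in> {-h<..<h}"
    let ?g = "\<lambda>s. \<eta> (apply_bcontfun x s)"
    let ?G = "\<lambda>u. p + (integral {-h..u} ?g - integral {-h..0} ?g)"
    have "(?G has_vector_derivative (0 + (?g t - 0))) (at t within {-h..h})"
      using t by (intro has_vector_derivative_add has_vector_derivative_diff has_vector_derivative_const
          integral_has_vector_derivative gcont[OF x(1)]) auto
    then have "(?G has_vector_derivative ?g t) (at t)"
      using t at_within_interior[of t "{-h..h}"] by simp
    then have "(c has_vector_derivative ?g t) (at t)"
      by (rule has_vector_derivative_transform_within_open[OF _ open_greaterThanLessThan t])
        (simp add: cF F_def clamp_id)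
    then show "(c has_vector_derivative \<eta> (c t)) (at t)" unfolding c_def .
  qed
qed



lemma det3_scale3: "det3 a b (k *\<^sub>R x) = k * det3 a b x"
  unfolding det3_def det_3 by (simp add: algebra_simps)

lemma vf_iter_Suc: "vf_iter X (Suc k) g = vf_deriv X (vf_iter X k g)"
  unfolding vf_iter_def by simp

lemma vf_iter_0: "vf_iter X 0 g = g"
  unfolding vf_iter_def by simp

lemma nderiv_Suc: "nderiv (Suc k) g t = vector_derivative (nderiv k g) (at t)"
  unfolding nderiv_def by simp

lemma nderiv_0: "nderiv 0 g = g"
  unfolding nderiv_def by simp

lemma vf_iter_smooth:
  assumes "open U" "\<forall>k. Ck_on k U X" "\<forall>k. Ck_on k U g"
  shows "Ck_on k U (vf_iter X j g)"
proof (induction j arbitrary: k)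
  case 0 then show ?case using assms by (simp add: vf_iter_0)
next
  case (Suc j) then show ?case
    using Ck_vf[OF assms(1) Suc.IH[of "Suc k"] assms(2)[rule_format, of k]] by (simp add: vf_iter_Suc)
qed

lemma chain_vf:
  fixes g :: "real \<times> real \<Rightarrow> 'b::real_normed_vector"
  assumes "(c has_vector_derivative X (c t)) (at t)" "g differentiable at (c t)"
  shows "((\<lambda>t. g (c t)) has_vector_derivative vf_deriv X g (c t)) (at t)"
proof -
  have hc: "(c has_derivative (\<lambda>x. x *\<^sub>R X (c t))) (at t)" using assms(1) by (simp add: has_vector_derivative_def)
  have hg: "(g has_derivative frechet_derivative g (at (c t))) (at (c t))" using assms(2) frechet_derivative_works by blast
  have lin: "linear (frechet_derivative g (at (c t)))" using has_derivative_linear[OF hg] .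
  have "((\<lambda>t. g (c t)) has_derivative (frechet_derivative g (at (c t)) \<circ> (\<lambda>x. x *\<^sub>R X (c t)))) (at t)"
    using diff_chain_at[OF hc hg] by (simp add: o_def)
  moreover have "(frechet_derivative g (at (c t)) \<circ> (\<lambda>x. x *\<^sub>R X (c t))) = (\<lambda>x. x *\<^sub>R vf_deriv X g (c t))"
  proof -
    have sc: "frechet_derivative g (at (c t)) (a *\<^sub>R w) = a *\<^sub>R frechet_derivative g (at (c t)) w" for a w
      using lin[unfolded linear_iff] by blast
    show ?thesis by (auto simp: vf_deriv_def fun_eq_iff sc)
  qed
  ultimately show ?thesis by (simp add: has_vector_derivative_def)
qed

theorem lemma3p5:
  fixes U :: "(real \<times> real) set" and f n :: "real \<times> real \<Rightarrow> real^3"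
    and p :: "real \<times> real" and \<gamma> :: "real \<Rightarrow> real \<times> real" and \<delta> :: real
    and \<xi> \<eta> :: "real \<times> real \<Rightarrow> real \<times> real"
  assumes frontal: "frontal_with U f n"
    and pU: "p \<in> U"
    and nondeg: "nondegenerate_singular_pt f n p"
    and \<delta>pos: "\<delta> > 0"
    and \<gamma>smooth: "C_infty_on {-\<delta><..<\<delta>} \<gamma>"
    and \<gamma>U: "\<gamma> ` {-\<delta><..<\<delta>} \<subseteq> U"
    and \<gamma>reg: "\<forall>t\<in>{-\<delta><..<\<delta>}. vector_derivative \<gamma> (at t) \<noteq> 0"
    and \<gamma>0: "\<gamma> 0 = p"
    and \<gamma>sing: "\<forall>t\<in>{-\<delta><..<\<delta>}. singular_pt f (\<gamma> t)"
    and \<gamma>all: "\<exists>W. open W \<and> p \<in> W \<and> {x \<in> U \<inter> W. singular_pt f x} \<subseteq> \<gamma> ` {-\<delta><..<\<delta>}"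
    and \<xi>smooth: "C_infty_on U \<xi>" and \<eta>smooth: "C_infty_on U \<eta>"
    and \<xi>\<gamma>: "\<forall>t\<in>{-\<delta><..<\<delta>}. \<xi> (\<gamma> t) = vector_derivative \<gamma> (at t)"
    and \<eta>null: "\<forall>t\<in>{-\<delta><..<\<delta>}. frechet_derivative f (at (\<gamma> t)) (\<eta> (\<gamma> t)) = 0"
    and detpos: "\<forall>t\<in>{-\<delta><..<\<delta>}. det2 (\<xi> (\<gamma> t)) (\<eta> (\<gamma> t)) > 0"
    and a: "vf_iter \<eta> 3 f p = 0"
    and b: "lin_indep2 (vf_deriv \<xi> f p) (vf_iter \<eta> 2 f p)"
    and c_dep: "\<not> lin_indep2 (vf_deriv \<xi> (vf_iter \<eta> 3 f) p) (vf_iter \<eta> 2 f p)"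
  shows "\<exists>\<epsilon> > 0. \<exists>c :: real \<Rightarrow> real \<times> real. \<exists>l :: real.
           C_infty_on {-\<epsilon><..<\<epsilon>} c \<and> c ` {-\<epsilon><..<\<epsilon>} \<subseteq> U \<and>
           (\<forall>t\<in>{-\<epsilon><..<\<epsilon>}. vector_derivative c (at t) \<noteq> 0) \<and>
           c 0 = p \<and>
           (\<exists>k. vector_derivative c (at 0) = k *\<^sub>R \<eta> p) \<and>
           nderiv 2 (f \<circ> c) 0 \<noteq> 0 \<and>
           nderiv 3 (f \<circ> c) 0 = l *\<^sub>R nderiv 2 (f \<circ> c) 0 \<and>
           det3 (frechet_derivative f (at p) (vector_derivative \<gamma> (at 0)))
                (nderiv 2 (f \<circ> c) 0)
                (3 *\<^sub>R nderiv 5 (f \<circ> c) 0 - (10 * l) *\<^sub>R nderiv 4 (f \<circ> c) 0)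
             = 3 * det3 (vf_deriv \<xi> f p) (vf_iter \<eta> 2 f p) (vf_iter \<eta> 5 f p)"
proof -
  have U: "open U" and fs: "\<forall>k. Ck_on k U f" using frontal unfolding frontal_with_def C_infty_on_def by auto
  have es: "\<forall>k. Ck_on k U \<eta>" using \<eta>smooth unfolding C_infty_on_def by auto
  have t0: "(0::real) \<in> {-\<delta><..<\<delta>}" using \<delta>pos by simp
  have etap: "\<eta> p \<noteq> 0"
  proof
    assume "\<eta> p = 0"
    then have "det2 (\<xi> (\<gamma> 0)) (\<eta> (\<gamma> 0)) = 0" using \<gamma>0 by (simp add: det2_def)
    moreover have "0 < det2 (\<xi> (\<gamma> 0)) (\<eta> (\<gamma> 0))" using detpos t0 by blast
    ultimately show False by simp
  qed
  define V where "V = U \<inter> \<eta> -` (- {0})"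
  have Vo: "open V" unfolding V_def
    using es Ck_mono_le[of 0] by (intro continuous_open_preimage[OF _ U]) auto
  have pV: "p \<in> V" unfolding V_def using pU etap by simp
  obtain r0 where r0: "r0 > 0" "ball p r0 \<subseteq> V" using Vo pV openE by blast
  define r where "r = r0 / 2"
  have r: "r > 0" "cball p r \<subseteq> V" unfolding r_def using r0 by (auto simp: subset_eq)
  have rU: "cball p r \<subseteq> U" using r(2) unfolding V_def by blast
  obtain h c where hc: "h > 0" "c 0 = p" "\<And>t. c t \<in> cball p r"
    "\<And>t. t \<in> {-h<..<h} \<Longrightarrow> (c has_vector_derivative \<eta> (c t)) (at t)"
    using ode_exists[OF U _ rU r(1), of \<eta>] es by blast
  define I where "I = {-h<..<h}"
  have Io: "open I" unfolding I_def by simp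
  have cI: "c ` I \<subseteq> U" using hc(3) rU by blast
  have cd: "(c has_vector_derivative \<eta> (c t)) (at t)" if "t \<in> I" for t using hc(4) that unfolding I_def by blast
  have cdiff: "c differentiable_on I"
    unfolding differentiable_on_eq_differentiable_at[OF Io]
    using cd differentiable_def has_vector_derivative_def by blast
  have cfd: "frechet_derivative c (at t) v = v *\<^sub>R \<eta> (c t)" if "t \<in> I" for t v
    using fd_apply[of c "\<lambda>x. x *\<^sub>R \<eta> (c t)" t v] cd[OF that] by (simp add: has_vector_derivative_def)
  have csm: "Ck_on k I c" for k
  proof (induction k)
    case 0 then show ?case using cdiff by (simp add: differentiable_imp_continuous_on)
  next
    case (Suc k)
    show ?case
    proof (rule Ck_Suc_intro[OF Io cdiff])
      fix v
      show "\<exists>D. Ck_on k I D \<and> (\<forall>t\<in>I. frechet_derivative c (at t) v = D t)"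
      proof (intro exI conjI ballI)
        show "Ck_on k I (\<lambda>t. v *\<^sub>R \<eta> (c t))"
          using Ck_scaleR[OF Io Ck_const Ck_comp[OF U Io cI _ Suc.IH]] es by blast
        show "frechet_derivative c (at t) v = v *\<^sub>R \<eta> (c t)" if "t \<in> I" for t using cfd[OF that] .
      qed
    qed
  qed
  have gs: "Ck_on k U (vf_iter \<eta> j f)" for k j by (rule vf_iter_smooth[OF U es fs])
  have nd: "nderiv j (f \<circ> c) t = vf_iter \<eta> j f (c t)" if "t \<in> I" for j t
    using that
  proof (induction j arbitrary: t)
    case 0 then show ?case by (simp add: nderiv_0 vf_iter_0)
  next
    case (Suc j)
    have "vf_iter \<eta> j f differentiable at (c t)"
      using gs[of 1 j] cI Suc.prems differentiable_on_eq_differentiable_at[OF U] by auto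
    then have "((\<lambda>t. vf_iter \<eta> j f (c t)) has_vector_derivative vf_iter \<eta> (Suc j) f (c t)) (at t)"
      using chain_vf[of c \<eta> t, OF cd[OF Suc.prems]] by (simp add: vf_iter_Suc)
    then have "(nderiv j (f \<circ> c) has_vector_derivative vf_iter \<eta> (Suc j) f (c t)) (at t)"
      by (rule has_vector_derivative_transform_within_open[OF _ Io Suc.prems]) (simp add: Suc.IH)
    then show ?case unfolding nderiv_Suc by (rule vector_derivative_at)
  qed
  have I0: "0 \<in> I" unfolding I_def using hc(1) by simp
  have ndp: "nderiv j (f \<circ> c) 0 = vf_iter \<eta> j f p" for j using nd[OF I0] hc(2) by simp
  have e2: "vf_iter \<eta> 2 f p \<noteq> 0"
  proof
    assume "vf_iter \<eta> 2 f p = 0"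
    then have "0 *\<^sub>R vf_deriv \<xi> f p + 1 *\<^sub>R vf_iter \<eta> 2 f p = 0" by simp
    then show False using b unfolding lin_indep2_def by fastforce
  qed
  have gam: "frechet_derivative f (at p) (vector_derivative \<gamma> (at 0)) = vf_deriv \<xi> f p"
    using \<xi>\<gamma> t0 \<gamma>0 unfolding vf_deriv_def by metis
  show ?thesis
  proof (intro exI conjI)
    show "h > 0" by (rule hc(1))
    show "C_infty_on {-h<..<h} c" using csm unfolding C_infty_on_def I_def by blast
    show "c ` {-h<..<h} \<subseteq> U" using cI unfolding I_def .
    show "\<forall>t\<in>{-h<..<h}. vector_derivative c (at t) \<noteq> 0"
    proof
      fix t assume t: "t \<in> {-h<..<h}"
      have "vector_derivative c (at t) = \<eta> (c t)" using cd t unfolding I_def by (simp add: vector_derivative_at)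
      moreover have "c t \<in> V" using hc(3) r(2) by blast
      ultimately show "vector_derivative c (at t) \<noteq> 0" unfolding V_def by simp
    qed
    show "c 0 = p" by (rule hc(2))
    show "vector_derivative c (at 0) = 1 *\<^sub>R \<eta> p" using cd[OF I0] hc(2) by (simp add: vector_derivative_at)
    show "nderiv 2 (f \<circ> c) 0 \<noteq> 0" using e2 ndp by simp
    show "nderiv 3 (f \<circ> c) 0 = 0 *\<^sub>R nderiv 2 (f \<circ> c) 0" using a ndp by simp
    show "det3 (frechet_derivative f (at p) (vector_derivative \<gamma> (at 0)))
                (nderiv 2 (f \<circ> c) 0)
                (3 *\<^sub>R nderiv 5 (f \<circ> c) 0 - (10 * 0) *\<^sub>R nderiv 4 (f \<circ> c) 0)
             = 3 * det3 (vf_deriv \<xi> f p) (vf_iter \<eta> 2 f p) (vf_iter \<eta> 5 f p)"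
      using gam ndp by (simp add: det3_scale3)
  qed
qed


end
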